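(* If a closure model $\mathcal{M}=((X,\mathcal{C}_R),\mathcal{V})$ is quasi-discrete, finitely closed and finitely backward closed, then for all $x_1,x_2\in X$: $x_1\simeq x_2$ iff $x_1\equiv_{SLCS}x_2$.
   Context: Quasi-discrete closure model: $\mathcal{C}_R(A)=A\cup\{x\mid\exists a\in A.\ aRx\}$, $\vec{\mathcal{C}}(x)=\mathcal{C}_R(\{x\})$, $\overleftarrow{\mathcal{C}}(x)=\mathcal{C}_{R^{-1}}(\{x\})$, $\mathcal{V}:AP\to\mathcal{P}(X)$, $\mathcal{V}^{-1}(x)=\{p\mid x\in\mathcal{V}(p)\}$; finitely (backward) closed: every $\vec{\mathcal{C}}(x)$ (resp. $\overleftarrow{\mathcal{C}}(x)$) is finite. Path: $\pi:\mathbb{N}\to X$ with $\pi[\mathcal{C}_{succ}(N)]\subseteq\mathcal{C}_R(\pi[N])$ for all $N\subseteq\mathbb{N}$, $\mathcal{C}_{succ}$ the closure based on $n\mapsto n+1$. SLCS: $\Phi::=p\mid\neg\Phi\mid\Phi\lor\Phi\mid\vec\rho\,\Phi_1[\Phi_2]\mid\overleftarrow\rho\,\Phi_1[\Phi_2]$; $x\models\vec\rho\,\Phi_1[\Phi_2]$ iff some path $\pi$ and $\ell$ have $\pi(0)=x$, $\pi(\ell)\models\Phi_1$, $\pi(j)\models\Phi_2$ for $0<j<\ell$; $x\models\overleftarrow\rho\,\Phi_1[\Phi_2]$ iff some path $\pi$ and $\ell$ have $\pi(\ell)=x$, $\pi(0)\models\Phi_1$, $\pi(j)\models\Phi_2$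 for $0<j<\ell$. $\equiv_{SLCS}$: same SLCS formulas. $\simeq$: union of all non-empty equivalence relations $B$ with $(x_1,x_2)\in B\Rightarrow\mathcal{V}^{-1}(x_1)=\mathcal{V}^{-1}(x_2)$ and for all $C\in X/B$, $\vec{\mathcal{C}}(x_1)\cap C\neq\emptyset\iff\vec{\mathcal{C}}(x_2)\cap C\neq\emptyset$ and $\overleftarrow{\mathcal{C}}(x_1)\cap C\neq\emptyset\iff\overleftarrow{\mathcal{C}}(x_2)\cap C\neq\emptyset$. *)

theory Defs
  imports Main
begin

text \<open>Quasi-discrete closure model: carrier is the type 'a (X), closure given by a
relation R, valuation V :: 'p => 'a set (AP = type 'p).\<close>

definition clR :: "('a \<times> 'a) set \<Rightarrow> 'a set \<Rightarrow> 'a set" where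
  "clR R A = A \<union> {x. \<exists>a\<in>A. (a, x) \<in> R}"

definition fwdC :: "('a \<times> 'a) set \<Rightarrow> 'a \<Rightarrow> 'a set" where
  "fwdC R x = clR R {x}"

definition bwdC :: "('a \<times> 'a) set \<Rightarrow> 'a \<Rightarrow> 'a set" where
  "bwdC R x = clR (R\<inverse>) {x}"

definition Vinv :: "('p \<Rightarrow> 'a set) \<Rightarrow> 'a \<Rightarrow> 'p set" where
  "Vinv V x = {p. x \<in> V p}"

definition finitely_closed :: "('a \<times> 'a) set \<Rightarrow> bool" where
  "finitely_closed R \<longleftrightarrow> (\<forall>x. finite (fwdC R x))"

definition finitely_backward_closed :: "('a \<times> 'a) set \<Rightarrow> bool" where
  "finitely_backward_closed R \<longleftrightarrow> (\<forall>x. finite (bwdC R x))"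

definition succ_rel :: "(nat \<times> nat) set" where
  "succ_rel = {(n, m). m = Suc n}"

definition is_path :: "('a \<times> 'a) set \<Rightarrow> (nat \<Rightarrow> 'a) \<Rightarrow> bool" where
  "is_path R \<pi> \<longleftrightarrow> (\<forall>N. \<pi> ` (clR succ_rel N) \<subseteq> clR R (\<pi> ` N))"

datatype 'p slcs =
    Atom 'p
  | Neg "'p slcs"
  | Disj "'p slcs" "'p slcs"
  | RhoF "'p slcs" "'p slcs"
  | RhoB "'p slcs" "'p slcs"

fun sat :: "('a \<times> 'a) set \<Rightarrow> ('p \<Rightarrow> 'a set) \<Rightarrow> 'a \<Rightarrow> 'p slcs \<Rightarrow> bool" where
  "sat R V x (Atom p) = (x \<in> V p)"
| "sat R V x (Neg \<phi>) = (\<not> sat R V x \<phi>)"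
| "sat R V x (Disj \<phi> \<psi>) = (sat R V x \<phi> \<or> sat R V x \<psi>)"
| "sat R V x (RhoF \<phi>1 \<phi>2) =
     (\<exists>\<pi> l. is_path R \<pi> \<and> \<pi> 0 = x \<and> sat R V (\<pi> l) \<phi>1 \<and>
            (\<forall>j. 0 < j \<and> j < l \<longrightarrow> sat R V (\<pi> j) \<phi>2))"
| "sat R V x (RhoB \<phi>1 \<phi>2) =
     (\<exists>\<pi> l. is_path R \<pi> \<and> \<pi> l = x \<and> sat R V (\<pi> 0) \<phi>1 \<and>
            (\<forall>j. 0 < j \<and> j < l \<longrightarrow> sat R V (\<pi> j) \<phi>2))"

definition slcs_equiv :: "('a \<times> 'a) set \<Rightarrow> ('p \<Rightarrow> 'a set) \<Rightarrow> 'a \<Rightarrow> 'a \<Rightarrow> bool" where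
  "slcs_equiv R V x1 x2 \<longleftrightarrow> (\<forall>\<phi>. sat R V x1 \<phi> \<longleftrightarrow> sat R V x2 \<phi>)"

definition is_cmb :: "('a \<times> 'a) set \<Rightarrow> ('p \<Rightarrow> 'a set) \<Rightarrow> ('a \<times> 'a) set \<Rightarrow> bool" where
  "is_cmb R V B \<longleftrightarrow> B \<noteq> {} \<and> equiv UNIV B \<and>
     (\<forall>(x1, x2) \<in> B. Vinv V x1 = Vinv V x2 \<and>
        (\<forall>C \<in> UNIV // B.
           (fwdC R x1 \<inter> C \<noteq> {} \<longleftrightarrow> fwdC R x2 \<inter> C \<noteq> {}) \<and>
           (bwdC R x1 \<inter> C \<noteq> {} \<longleftrightarrow> bwdC R x2 \<inter> C \<noteq> {})))"

definition cmb_equiv :: "('a \<times> 'a) set \<Rightarrow> ('p \<Rightarrow> 'a set) \<Rightarrow> ('a \<times> 'a) set" where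
  "cmb_equiv R V = \<Union> {B. is_cmb R V B}"

end

theory Submission
  imports Defs
begin

lemma fwdC_iff: "y \<in> fwdC R x \<longleftrightarrow> y = x \<or> (x, y) \<in> R"
  by (auto simp: fwdC_def clR_def)

lemma bwdC_iff: "y \<in> bwdC R x \<longleftrightarrow> y = x \<or> (y, x) \<in> R"
  by (auto simp: bwdC_def clR_def)

lemma is_path_iff: "is_path R \<pi> \<longleftrightarrow> (\<forall>n. \<pi> (Suc n) \<in> fwdC R (\<pi> n))"
proof
  assume "is_path R \<pi>"
  then show "\<forall>n. \<pi> (Suc n) \<in> fwdC R (\<pi> n)"
    unfolding is_path_def fwdC_def
    apply (intro allI)
    subgoal for n
      apply (drule spec[of _ "{n}"])
      by (auto simp: clR_def succ_rel_def)
    done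
next
  assume H: "\<forall>n. \<pi> (Suc n) \<in> fwdC R (\<pi> n)"
  show "is_path R \<pi>"
    unfolding is_path_def
  proof (intro allI subsetI)
    fix N y assume "y \<in> \<pi> ` clR succ_rel N"
    then obtain m where m: "m \<in> clR succ_rel N" "y = \<pi> m" by auto
    show "y \<in> clR R (\<pi> ` N)"
    proof (cases "m \<in> N")
      case True then show ?thesis using m by (auto simp: clR_def)
    next
      case False
      then obtain n where n: "n \<in> N" "m = Suc n" using m by (auto simp: clR_def succ_rel_def)
      then have "\<pi> m \<in> fwdC R (\<pi> n)" using H by auto
      then show ?thesis using n m by (auto simp: fwdC_iff clR_def)
    qed
  qed
qed

lemma fwd_match:
  assumes "is_cmb R V B" "(x, y) \<in> B" "x' \<in> fwdC R x"
  shows "\<exists>y'\<in>fwdC R y. (x', y') \<in> B"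
proof -
  have eq: "equiv UNIV B" using assms(1) by (simp add: is_cmb_def)
  have C: "B `` {x'} \<in> UNIV // B" by (rule quotientI) simp
  have "x' \<in> B `` {x'}" using eq by (simp add: equiv_def refl_on_def)
  then have "fwdC R x \<inter> B `` {x'} \<noteq> {}" using assms(3) by blast
  then have "fwdC R y \<inter> B `` {x'} \<noteq> {}" using assms(1,2) C unfolding is_cmb_def by fast
  then show ?thesis by blast
qed

lemma bwd_match:
  assumes "is_cmb R V B" "(x, y) \<in> B" "x' \<in> bwdC R x"
  shows "\<exists>y'\<in>bwdC R y. (x', y') \<in> B"
proof -
  have eq: "equiv UNIV B" using assms(1) by (simp add: is_cmb_def)
  have C: "B `` {x'} \<in> UNIV // B" by (rule quotientI) simp
  have "x' \<in> B `` {x'}" using eq by (simp add: equiv_def refl_on_def)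
  then have "bwdC R x \<inter> B `` {x'} \<noteq> {}" using assms(3) by blast
  then have "bwdC R y \<inter> B `` {x'} \<noteq> {}" using assms(1,2) C unfolding is_cmb_def by fast
  then show ?thesis by blast
qed

lemma fwd_path:
  assumes "is_cmb R V B" "is_path R \<pi>" "(\<pi> 0, y) \<in> B"
  shows "\<exists>\<sigma>. is_path R \<sigma> \<and> \<sigma> 0 = y \<and> (\<forall>j\<le>l. (\<pi> j, \<sigma> j) \<in> B)"
proof (induction l)
  case 0
  show ?case using assms(3) by (intro exI[of _ "\<lambda>_. y"]) (auto simp: is_path_iff fwdC_iff)
next
  case (Suc l)
  then obtain \<sigma> where s: "is_path R \<sigma>" "\<sigma> 0 = y" "\<forall>j\<le>l. (\<pi> j, \<sigma> j) \<in> B" by blast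
  have "\<pi> (Suc l) \<in> fwdC R (\<pi> l)" using assms(2) by (simp add: is_path_iff)
  then obtain z where z: "z \<in> fwdC R (\<sigma> l)" "(\<pi> (Suc l), z) \<in> B"
    using fwd_match[OF assms(1)] s(3) by blast
  define \<sigma>' where "\<sigma>' = (\<lambda>n. if n \<le> l then \<sigma> n else z)"
  have "is_path R \<sigma>'"
    unfolding is_path_iff
  proof
    fix n
    show "\<sigma>' (Suc n) \<in> fwdC R (\<sigma>' n)"
    proof (cases "Suc n \<le> l")
      case True then show ?thesis using s(1) by (simp add: \<sigma>'_def is_path_iff)
    next
      case False
      then show ?thesis using z(1) by (cases "n = l") (auto simp: \<sigma>'_def fwdC_iff)
    qed
  qed
  moreover have "\<forall>j\<le>Suc l. (\<pi> j, \<sigma>' j) \<in> B"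
    using s(3) z(2) by (auto simp: \<sigma>'_def le_Suc_eq)
  ultimately show ?case using s(2) by (intro exI[of _ \<sigma>']) (simp add: \<sigma>'_def)
qed

lemma bwd_path:
  assumes "is_cmb R V B" "is_path R \<pi>"
  shows "(\<pi> l, y) \<in> B \<Longrightarrow> \<exists>\<sigma>. is_path R \<sigma> \<and> \<sigma> l = y \<and> (\<forall>j\<le>l. (\<pi> j, \<sigma> j) \<in> B)"
proof (induction l arbitrary: y)
  case 0
  show ?case using 0 by (intro exI[of _ "\<lambda>_. y"]) (auto simp: is_path_iff fwdC_iff)
next
  case (Suc l)
  have "\<pi> (Suc l) \<in> fwdC R (\<pi> l)" using assms(2) by (simp add: is_path_iff)
  then have "\<pi> l \<in> bwdC R (\<pi> (Suc l))" by (auto simp: fwdC_iff bwdC_iff)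
  then obtain z where z: "z \<in> bwdC R y" "(\<pi> l, z) \<in> B"
    using bwd_match[OF assms(1) Suc.prems] by blast
  then obtain \<sigma> where s: "is_path R \<sigma>" "\<sigma> l = z" "\<forall>j\<le>l. (\<pi> j, \<sigma> j) \<in> B"
    using Suc.IH by blast
  define \<sigma>' where "\<sigma>' = (\<lambda>n. if n \<le> l then \<sigma> n else y)"
  have "is_path R \<sigma>'"
    unfolding is_path_iff
  proof
    fix n
    show "\<sigma>' (Suc n) \<in> fwdC R (\<sigma>' n)"
    proof (cases "Suc n \<le> l")
      case True then show ?thesis using s(1) by (simp add: \<sigma>'_def is_path_iff)
    next
      case False
      then show ?thesis using z(1) s(2) by (cases "n = l") (auto simp: \<sigma>'_def fwdC_iff bwdC_iff)
    qed
  qed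
  moreover have "\<forall>j\<le>Suc l. (\<pi> j, \<sigma>' j) \<in> B"
    using s(3) Suc.prems by (auto simp: \<sigma>'_def le_Suc_eq)
  ultimately show ?case by (intro exI[of _ \<sigma>']) (simp add: \<sigma>'_def)
qed

lemma cmb_sym: "is_cmb R V B \<Longrightarrow> (x, y) \<in> B \<Longrightarrow> (y, x) \<in> B"
  by (auto simp: is_cmb_def equiv_def sym_def)

lemma cmb_sat:
  assumes B: "is_cmb R V B"
  shows "(x, y) \<in> B \<Longrightarrow> sat R V x \<phi> \<longleftrightarrow> sat R V y \<phi>"
proof (induction \<phi> arbitrary: x y)
  case (Atom p)
  then have "Vinv V x = Vinv V y" using B unfolding is_cmb_def by fast
  then show ?case by (auto simp: Vinv_def)
next
  case (Neg \<phi>) then show ?case by simp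
next
  case (Disj \<phi>1 \<phi>2) then show ?case by simp
next
  case (RhoF \<phi>1 \<phi>2)
  have one: "sat R V y (RhoF \<phi>1 \<phi>2)" if xy: "(x, y) \<in> B" and sx: "sat R V x (RhoF \<phi>1 \<phi>2)" for x y
  proof -
    obtain \<pi> l where p: "is_path R \<pi>" "\<pi> 0 = x" "sat R V (\<pi> l) \<phi>1"
      "\<forall>j. 0 < j \<and> j < l \<longrightarrow> sat R V (\<pi> j) \<phi>2" using sx by auto
    obtain \<sigma> where s: "is_path R \<sigma>" "\<sigma> 0 = y" "\<forall>j\<le>l. (\<pi> j, \<sigma> j) \<in> B"
      using fwd_path[OF B p(1)] p(2) xy by blast
    have "sat R V (\<sigma> l) \<phi>1" using RhoF.IH(1) s(3) p(3) by blast
    moreover have "\<forall>j. 0 < j \<and> j < l \<longrightarrow> sat R V (\<sigma> j) \<phi>2"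
      using RhoF.IH(2) s(3) p(4) by (meson less_imp_le)
    ultimately show ?thesis using s(1,2) by auto
  qed
  show ?case using one RhoF.prems cmb_sym[OF B] by blast
next
  case (RhoB \<phi>1 \<phi>2)
  have one: "sat R V y (RhoB \<phi>1 \<phi>2)" if xy: "(x, y) \<in> B" and sx: "sat R V x (RhoB \<phi>1 \<phi>2)" for x y
  proof -
    obtain \<pi> l where p: "is_path R \<pi>" "\<pi> l = x" "sat R V (\<pi> 0) \<phi>1"
      "\<forall>j. 0 < j \<and> j < l \<longrightarrow> sat R V (\<pi> j) \<phi>2" using sx by auto
    obtain \<sigma> where s: "is_path R \<sigma>" "\<sigma> l = y" "\<forall>j\<le>l. (\<pi> j, \<sigma> j) \<in> B"
      using bwd_path[OF B p(1)] p(2) xy by blast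
    have "sat R V (\<sigma> 0) \<phi>1" using RhoB.IH(1) s(3) p(3) by blast
    moreover have "\<forall>j. 0 < j \<and> j < l \<longrightarrow> sat R V (\<sigma> j) \<phi>2"
      using RhoB.IH(2) s(3) p(4) by (meson less_imp_le)
    ultimately show ?thesis using s(1,2) by auto
  qed
  show ?case using one RhoB.prems cmb_sym[OF B] by blast
qed

definition Top :: "'p slcs" where "Top = Disj (Atom undefined) (Neg (Atom undefined))"
definition Bot :: "'p slcs" where "Bot = Neg Top"

lemma sat_Top[simp]: "sat R V x Top" by (simp add: Top_def)
lemma sat_Bot[simp]: "\<not> sat R V x Bot" by (simp add: Bot_def)

lemma rhoF_bot: "sat R V x (RhoF \<Phi> Bot) \<longleftrightarrow> (\<exists>w\<in>fwdC R x. sat R V w \<Phi>)"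
proof
  assume "sat R V x (RhoF \<Phi> Bot)"
  then obtain \<pi> l where p: "is_path R \<pi>" "\<pi> 0 = x" "sat R V (\<pi> l) \<Phi>"
      "\<forall>j. 0 < j \<and> j < l \<longrightarrow> sat R V (\<pi> j) Bot" by auto
  have "l = 0 \<or> l = 1"
  proof (rule ccontr)
    assume "\<not> (l = 0 \<or> l = 1)"
    then have "0 < (1::nat) \<and> 1 < l" by arith
    then show False using p(4) by auto
  qed
  then show "\<exists>w\<in>fwdC R x. sat R V w \<Phi>"
  proof
    assume "l = 0" then show ?thesis using p by (auto simp: fwdC_iff)
  next
    assume "l = 1" then show ?thesis using p is_path_iff[of R \<pi>] by (metis One_nat_def)
  qed
next
  assume "\<exists>w\<in>fwdC R x. sat R V w \<Phi>"
  then obtain w where w: "w \<in> fwdC R x" "sat R V w \<Phi>" by blast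
  let ?\<pi> = "\<lambda>n::nat. if n = 0 then x else w"
  have "is_path R ?\<pi>" using w(1) by (auto simp: is_path_iff fwdC_iff)
  then show "sat R V x (RhoF \<Phi> Bot)" using w(2)
    by (simp only: sat.simps) (rule exI[of _ ?\<pi>], rule exI[of _ 1], auto)
qed

lemma rhoB_bot: "sat R V x (RhoB \<Phi> Bot) \<longleftrightarrow> (\<exists>w\<in>bwdC R x. sat R V w \<Phi>)"
proof
  assume "sat R V x (RhoB \<Phi> Bot)"
  then obtain \<pi> l where p: "is_path R \<pi>" "\<pi> l = x" "sat R V (\<pi> 0) \<Phi>"
      "\<forall>j. 0 < j \<and> j < l \<longrightarrow> sat R V (\<pi> j) Bot" by auto
  have "l = 0 \<or> l = 1"
  proof (rule ccontr)
    assume "\<not> (l = 0 \<or> l = 1)"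
    then have "0 < (1::nat) \<and> 1 < l" by arith
    then show False using p(4) by auto
  qed
  then show "\<exists>w\<in>bwdC R x. sat R V w \<Phi>"
  proof
    assume "l = 0" then show ?thesis using p by (auto simp: bwdC_iff)
  next
    assume "l = 1"
    then have "x \<in> fwdC R (\<pi> 0)" using p is_path_iff[of R \<pi>] by (metis One_nat_def)
    then show ?thesis using p(3) by (auto simp: fwdC_iff bwdC_iff)
  qed
next
  assume "\<exists>w\<in>bwdC R x. sat R V w \<Phi>"
  then obtain w where w: "w \<in> bwdC R x" "sat R V w \<Phi>" by blast
  let ?\<pi> = "\<lambda>n::nat. if n = 0 then w else x"
  have "is_path R ?\<pi>" using w(1) by (auto simp: is_path_iff fwdC_iff bwdC_iff)
  then show "sat R V x (RhoB \<Phi> Bot)" using w(2)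
    by (simp only: sat.simps) (rule exI[of _ ?\<pi>], rule exI[of _ 1], auto)
qed

lemma separate:
  assumes "finite S"
  shows "\<forall>z\<in>S. \<not> slcs_equiv R V c z \<Longrightarrow> \<exists>\<Phi>. sat R V c \<Phi> \<and> (\<forall>z\<in>S. \<not> sat R V z \<Phi>)"
  using assms
proof (induction S rule: finite_induct)
  case empty
  show ?case by (intro exI[of _ Top]) simp
next
  case (insert z S)
  then obtain \<Phi> where P: "sat R V c \<Phi>" "\<forall>z\<in>S. \<not> sat R V z \<Phi>" by auto
  obtain \<psi> where "sat R V c \<psi> \<noteq> sat R V z \<psi>" using insert.prems by (auto simp: slcs_equiv_def)
  then obtain \<psi>' where q: "sat R V c \<psi>'" "\<not> sat R V z \<psi>'"
    by (metis sat.simps(2))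
  show ?case using P q by (intro exI[of _ "Neg (Disj (Neg \<Phi>) (Neg \<psi>'))"]) auto
qed

lemma E_cmb:
  assumes fc: "finitely_closed R" and bc: "finitely_backward_closed R"
  shows "is_cmb R V {(x, y). slcs_equiv R V x y}" (is "is_cmb R V ?E")
proof -
  have eq: "equiv UNIV ?E"
    by (auto simp: equiv_def refl_on_def sym_def trans_def slcs_equiv_def)
  have V: "Vinv V x = Vinv V y" if "slcs_equiv R V x y" for x y
    using that[unfolded slcs_equiv_def, rule_format, of "Atom _"] by (auto simp: Vinv_def)
  have F: "fwdC R y \<inter> C \<noteq> {}" if h1: "slcs_equiv R V x y" and h2: "C \<in> UNIV // ?E" and h3: "fwdC R x \<inter> C \<noteq> {}" for x y C
  proof (rule ccontr)
    assume n: "\<not> fwdC R y \<inter> C \<noteq> {}"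
    obtain c where C: "C = ?E `` {c}" using h2 by (auto elim: quotientE)
    have "\<forall>z\<in>fwdC R y. \<not> slcs_equiv R V c z" using n C by auto
    then obtain \<Phi> where P: "sat R V c \<Phi>" "\<forall>z\<in>fwdC R y. \<not> sat R V z \<Phi>"
      using separate[of "fwdC R y" R V c] fc by (auto simp: finitely_closed_def)
    obtain w where "w \<in> fwdC R x" "slcs_equiv R V c w" using h3 C by auto
    then have "sat R V x (RhoF \<Phi> Bot)" using P(1) rhoF_bot by (metis slcs_equiv_def)
    then have "sat R V y (RhoF \<Phi> Bot)" using h1 unfolding slcs_equiv_def by blast
    then show False using P(2) rhoF_bot by metis
  qed
  have Bw: "bwdC R y \<inter> C \<noteq> {}" if h1: "slcs_equiv R V x y" and h2: "C \<in> UNIV // ?E" and h3: "bwdC R x \<inter> C \<noteq> {}" for x y C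
  proof (rule ccontr)
    assume n: "\<not> bwdC R y \<inter> C \<noteq> {}"
    obtain c where C: "C = ?E `` {c}" using h2 by (auto elim: quotientE)
    have "\<forall>z\<in>bwdC R y. \<not> slcs_equiv R V c z" using n C by auto
    then obtain \<Phi> where P: "sat R V c \<Phi>" "\<forall>z\<in>bwdC R y. \<not> sat R V z \<Phi>"
      using separate[of "bwdC R y" R V c] bc by (auto simp: finitely_backward_closed_def)
    obtain w where "w \<in> bwdC R x" "slcs_equiv R V c w" using h3 C by auto
    then have "sat R V x (RhoB \<Phi> Bot)" using P(1) rhoB_bot by (metis slcs_equiv_def)
    then have "sat R V y (RhoB \<Phi> Bot)" using h1 unfolding slcs_equiv_def by blast
    then show False using P(2) rhoB_bot by metis
  qed
  have sy: "slcs_equiv R V y x" if "slcs_equiv R V x y" for x y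
    using that by (auto simp: slcs_equiv_def)
  have ne: "?E \<noteq> {}" by (auto simp: slcs_equiv_def)
  show ?thesis unfolding is_cmb_def
    using eq ne V F Bw sy by fast
qed

theorem theorem2:
  fixes R :: "('a \<times> 'a) set" and V :: "'p \<Rightarrow> 'a set"
  assumes "finitely_closed R" and "finitely_backward_closed R"
  shows "(x1, x2) \<in> cmb_equiv R V \<longleftrightarrow> slcs_equiv R V x1 x2"
proof
  assume "(x1, x2) \<in> cmb_equiv R V"
  then obtain B where "is_cmb R V B" "(x1, x2) \<in> B" by (auto simp: cmb_equiv_def)
  then show "slcs_equiv R V x1 x2" using cmb_sat by (metis slcs_equiv_def)
next
  assume "slcs_equiv R V x1 x2"
  then show "(x1, x2) \<in> cmb_equiv R V"
    using E_cmb[OF assms, of V] by (auto simp: cmb_equiv_def)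
qed

end
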